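(* Let $\langle(\kappa_n,I_n):n<\omega\rangle$ be such that each $\kappa_n$ is a cardinal and $I_n$ is an ideal on $\kappa_n$, and let $\langle J_n:n<\omega\rangle$ be the associated ideals defined in the context. Then for every $n<\omega$ and $A\subseteq\prod_{\ell<n}\kappa_\ell$: $A\in J_n$ if and only if there are functions $f_0,\dots,f_{n-1}$ such that $\mathrm{Dom}(f_\ell)=\prod_{m=\ell+1}^{n-1}\kappa_m$, $\mathrm{Rang}(f_\ell)\subseteq I_\ell$, and $A\subseteq\bigcup_{\ell<n}A^n_\ell(f_\ell)$, where $$A^n_\ell(f_\ell)=\{\eta\in\textstyle\prod_{m<n}\kappa_m:\eta(\ell)\in f_\ell(\eta\restriction(\ell,n))\}$$ and $\eta\restriction(\ell,n)=\langle\eta(\ell+1),\dots,\eta(n-1)\rangle$.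
   Context: $J_n$ is an ideal on $\prod_{\ell<n}\kappa_\ell$ defined by induction: $J_0$ is the trivial ideal $\{\emptyset\}$ on $\{\langle\rangle\}$; $J_{n+1}=\{A\subseteq\prod_{\ell\le n}\kappa_\ell:\{\alpha<\kappa_n:\{\eta\in\prod_{\ell<n}\kappa_\ell:\eta^\frown\langle\alpha\rangle\in A\}\notin J_n\}\in I_n\}$. *)

theory Defs
  imports Main
begin

text \<open>Each cardinal kappa_n is represented by an (arbitrary) set K n; only the
  underlying set matters. Elements of prod_{l<n} kappa_l are lists of length n.\<close>

definition is_ideal :: "'a set \<Rightarrow> 'a set set \<Rightarrow> bool" where
  "is_ideal S I \<longleftrightarrow> I \<subseteq> Pow S \<and> {} \<in> I \<and> S \<notin> I
     \<and> (\<forall>A\<in>I. \<forall>B. B \<subseteq> A \<longrightarrow> B \<in> I)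
     \<and> (\<forall>A\<in>I. \<forall>B\<in>I. A \<union> B \<in> I)"

definition prodK :: "(nat \<Rightarrow> 'a set) \<Rightarrow> nat \<Rightarrow> 'a list set" where
  "prodK K n = {\<eta>. length \<eta> = n \<and> (\<forall>i<n. \<eta> ! i \<in> K i)}"

text \<open>prod_{m=l+1}^{n-1} K m, as lists indexed from 0 (entry i lies in K (l+1+i))\<close>
definition prodK_from :: "(nat \<Rightarrow> 'a set) \<Rightarrow> nat \<Rightarrow> nat \<Rightarrow> 'a list set" where
  "prodK_from K l n = {\<nu>. length \<nu> = n - Suc l \<and> (\<forall>i<length \<nu>. \<nu> ! i \<in> K (Suc l + i))}"

primrec J :: "(nat \<Rightarrow> 'a set) \<Rightarrow> (nat \<Rightarrow> 'a set set) \<Rightarrow> nat \<Rightarrow> 'a list set set" where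
  "J K I 0 = {{}}"
| "J K I (Suc n) = {A. A \<subseteq> prodK K (Suc n) \<and>
      {\<alpha> \<in> K n. {\<eta> \<in> prodK K n. \<eta> @ [\<alpha>] \<in> A} \<notin> J K I n} \<in> I n}"

text \<open>A^n_l(f) = {eta in prod_{m<n} K m. eta(l) in f(eta restricted to (l,n))},
  where eta restricted to (l,n) = <eta(l+1),...,eta(n-1)> = drop (l+1) eta.\<close>
definition Aset :: "(nat \<Rightarrow> 'a set) \<Rightarrow> nat \<Rightarrow> nat \<Rightarrow> ('a list \<Rightarrow> 'a set) \<Rightarrow> 'a list set" where
  "Aset K n l f = {\<eta> \<in> prodK K n. \<eta> ! l \<in> f (drop (Suc l) \<eta>)}"

end

theory Submission
  imports Defs
begin

lemma prodK_snoc: "\<eta>' \<in> prodK K n \<Longrightarrow> \<alpha> \<in> K n \<Longrightarrow> \<eta>' @ [\<alpha>] \<in> prodK K (Suc n)"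
  by (auto simp: prodK_def nth_append less_Suc_eq)

lemma prodK_Suc_dest: "\<eta> \<in> prodK K (Suc n) \<Longrightarrow>
   \<eta> = butlast \<eta> @ [last \<eta>] \<and> butlast \<eta> \<in> prodK K n \<and> last \<eta> \<in> K n"
proof -
  assume h: "\<eta> \<in> prodK K (Suc n)"
  then have ne: "\<eta> \<noteq> []" and len: "length \<eta> = Suc n" by (auto simp: prodK_def)
  have e: "\<eta> = butlast \<eta> @ [last \<eta>]" using ne by simp
  have "butlast \<eta> \<in> prodK K n" using h len by (auto simp: prodK_def nth_butlast)
  moreover have "last \<eta> \<in> K n" using h len ne by (auto simp: prodK_def last_conv_nth)
  ultimately show ?thesis using e by blast
qed

lemma prodK_from_snoc: "l < n \<Longrightarrow> \<nu>' \<in> prodK_from K l n \<Longrightarrow> \<alpha> \<in> K n \<Longrightarrow> \<nu>' @ [\<alpha>] \<in> prodK_from K l (Suc n)"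
  by (auto simp: prodK_from_def nth_append less_Suc_eq)

lemma prodK_from_dest: "l < n \<Longrightarrow> \<nu> \<in> prodK_from K l (Suc n) \<Longrightarrow>
   \<nu> = butlast \<nu> @ [last \<nu>] \<and> butlast \<nu> \<in> prodK_from K l n \<and> last \<nu> \<in> K n"
proof -
  assume l: "l < n" and h: "\<nu> \<in> prodK_from K l (Suc n)"
  then have ne: "\<nu> \<noteq> []" and len: "length \<nu> = n - l" by (auto simp: prodK_from_def)
  have e: "\<nu> = butlast \<nu> @ [last \<nu>]" using ne by simp
  have "butlast \<nu> \<in> prodK_from K l n" using h len l by (auto simp: prodK_from_def nth_butlast)
  moreover have "last \<nu> \<in> K n"
  proof -
    have lt: "n - Suc l < length \<nu>" using len l by simp
    have all: "\<forall>i<length \<nu>. \<nu> ! i \<in> K (Suc l + i)" using h by (simp add: prodK_from_def)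
    have eq: "Suc l + (n - Suc l) = n" using l by simp
    have "\<nu> ! (n - Suc l) \<in> K (Suc l + (n - Suc l))" using all lt by blast
    then have "\<nu> ! (n - Suc l) \<in> K n" unfolding eq .
    moreover have "last \<nu> = \<nu> ! (n - Suc l)" using ne len l by (simp add: last_conv_nth)
    ultimately show ?thesis by simp
  qed
  ultimately show ?thesis using e by blast
qed

lemma nil_from: "[] \<in> prodK_from K n (Suc n)"
  by (simp add: prodK_from_def)

theorem claim3p3:
  fixes K :: "nat \<Rightarrow> 'a set" and I :: "nat \<Rightarrow> 'a set set"
  assumes "\<And>n. is_ideal (K n) (I n)"
  shows "\<forall>n A. A \<subseteq> prodK K n \<longrightarrow>
           (A \<in> J K I n \<longleftrightarrow>
             (\<exists>f :: nat \<Rightarrow> 'a list \<Rightarrow> 'a set.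
                (\<forall>l<n. \<forall>\<nu>\<in>prodK_from K l n. f l \<nu> \<in> I l) \<and>
                A \<subseteq> (\<Union>l<n. Aset K n l (f l))))"
proof
  fix n show "\<forall>A. A \<subseteq> prodK K n \<longrightarrow>
           (A \<in> J K I n \<longleftrightarrow>
             (\<exists>f :: nat \<Rightarrow> 'a list \<Rightarrow> 'a set.
                (\<forall>l<n. \<forall>\<nu>\<in>prodK_from K l n. f l \<nu> \<in> I l) \<and>
                A \<subseteq> (\<Union>l<n. Aset K n l (f l))))"
  proof (induction n)
    case 0
    then show ?case by auto
  next
    case (Suc n)
    have emp: "\<And>m. {} \<in> I m" using assms by (simp add: is_ideal_def)
    have down: "\<And>m A B. A \<in> I m \<Longrightarrow> B \<subseteq> A \<Longrightarrow> B \<in> I m" using assms by (simp add: is_ideal_def)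
    show ?case
    proof (intro allI impI)
      fix A assume AS: "A \<subseteq> prodK K (Suc n)"
      define Aa where "Aa \<alpha> = {\<eta> \<in> prodK K n. \<eta> @ [\<alpha>] \<in> A}" for \<alpha>
      define B where "B = {\<alpha> \<in> K n. Aa \<alpha> \<notin> J K I n}"
      have JA: "A \<in> J K I (Suc n) \<longleftrightarrow> B \<in> I n" using AS by (simp add: B_def Aa_def)
      have AaS: "Aa \<alpha> \<subseteq> prodK K n" for \<alpha> by (auto simp: Aa_def)
      show "A \<in> J K I (Suc n) \<longleftrightarrow> (\<exists>f :: nat \<Rightarrow> 'a list \<Rightarrow> 'a set.
                (\<forall>l<Suc n. \<forall>\<nu>\<in>prodK_from K l (Suc n). f l \<nu> \<in> I l) \<and>
                A \<subseteq> (\<Union>l<Suc n. Aset K (Suc n) l (f l)))"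
      proof
        assume "A \<in> J K I (Suc n)"
        then have BI: "B \<in> I n" using JA by simp
        have ex: "\<forall>\<alpha>\<in>K n - B. \<exists>g :: nat \<Rightarrow> 'a list \<Rightarrow> 'a set.
                (\<forall>l<n. \<forall>\<nu>\<in>prodK_from K l n. g l \<nu> \<in> I l) \<and>
                Aa \<alpha> \<subseteq> (\<Union>l<n. Aset K n l (g l))"
        proof
          fix \<alpha> assume "\<alpha> \<in> K n - B"
          then have "Aa \<alpha> \<in> J K I n" by (simp add: B_def)
          then show "\<exists>g :: nat \<Rightarrow> 'a list \<Rightarrow> 'a set.
                (\<forall>l<n. \<forall>\<nu>\<in>prodK_from K l n. g l \<nu> \<in> I l) \<and>
                Aa \<alpha> \<subseteq> (\<Union>l<n. Aset K n l (g l))" using Suc.IH[rule_format, OF AaS[of \<alpha>]] by simp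
        qed
        obtain F where F0: "\<forall>\<alpha>\<in>K n - B.
                (\<forall>l<n. \<forall>\<nu>\<in>prodK_from K l n. F \<alpha> l \<nu> \<in> I l) \<and>
                Aa \<alpha> \<subseteq> (\<Union>l<n. Aset K n l (F \<alpha> l))" using bchoice[OF ex] by (elim exE) 
        have F: "\<And>\<alpha>. \<alpha> \<in> K n - B \<Longrightarrow>
                (\<forall>l<n. \<forall>\<nu>\<in>prodK_from K l n. F \<alpha> l \<nu> \<in> I l) \<and>
                Aa \<alpha> \<subseteq> (\<Union>l<n. Aset K n l (F \<alpha> l))" using F0 by (rule bspec)
        define f where "f l \<nu> = (if l = n then B else if last \<nu> \<in> K n - B then F (last \<nu>) l (butlast \<nu>) else {})" for l \<nu>
        show "\<exists>f :: nat \<Rightarrow> 'a list \<Rightarrow> 'a set.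
                (\<forall>l<Suc n. \<forall>\<nu>\<in>prodK_from K l (Suc n). f l \<nu> \<in> I l) \<and>
                A \<subseteq> (\<Union>l<Suc n. Aset K (Suc n) l (f l))"
        proof (intro exI[of _ f] conjI allI impI ballI subsetI)
          fix l \<nu> assume l: "l < Suc n" and \<nu>: "\<nu> \<in> prodK_from K l (Suc n)"
          show "f l \<nu> \<in> I l"
          proof (cases "l = n")
            case True
            then have "f l \<nu> = B" unfolding f_def by (simp only: if_P)
            then show ?thesis using BI True by simp
          next
            case False
            then have ln: "l < n" using l by simp
            show ?thesis
            proof (cases "last \<nu> \<in> K n - B")
              case True
              have "butlast \<nu> \<in> prodK_from K l n" using prodK_from_dest[OF ln \<nu>] by blast
              then have "F (last \<nu>) l (butlast \<nu>) \<in> I l" using F[OF True] ln by blast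
              then show ?thesis using False True by (simp add: f_def)
            next
              case False2: False
              have "f l \<nu> = {}" unfolding f_def by (simp only: if_not_P[OF False] if_not_P[OF False2]) 
              then show ?thesis using emp by simp
            qed
          qed
        next
          fix \<eta> assume \<eta>A: "\<eta> \<in> A"
          then have \<eta>P: "\<eta> \<in> prodK K (Suc n)" using AS by blast
          note d = prodK_Suc_dest[OF \<eta>P]
          define \<eta>' where "\<eta>' = butlast \<eta>"
          define \<alpha> where "\<alpha> = last \<eta>"
          have e: "\<eta> = \<eta>' @ [\<alpha>]" and \<eta>'P: "\<eta>' \<in> prodK K n" and \<alpha>K: "\<alpha> \<in> K n"
            unfolding \<eta>'_def \<alpha>_def using d by blast+
          have len: "length \<eta>' = n" using \<eta>'P by (simp add: prodK_def)
          show "\<eta> \<in> (\<Union>l<Suc n. Aset K (Suc n) l (f l))"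
          proof (cases "\<alpha> \<in> B")
            case True
            have "\<eta> \<in> Aset K (Suc n) n (f n)"
              using \<eta>P True e len by (simp add: Aset_def f_def nth_append)
            then show ?thesis by blast
          next
            case False
            then have \<alpha>KB: "\<alpha> \<in> K n - B" using \<alpha>K by simp
            have "\<eta>' \<in> Aa \<alpha>" using \<eta>'P \<eta>A e by (simp add: Aa_def)
            then obtain l where ln: "l < n" and m: "\<eta>' \<in> Aset K n l (F \<alpha> l)" using F[OF \<alpha>KB] by blast
            have dr: "drop (Suc l) \<eta> = drop (Suc l) \<eta>' @ [\<alpha>]" using e len ln by simp
            have "\<eta> ! l = \<eta>' ! l" using e len ln by (simp add: nth_append)
            moreover have "f l (drop (Suc l) \<eta>) = F \<alpha> l (drop (Suc l) \<eta>')"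
            proof -
              have "l \<noteq> n" using ln by simp
              moreover have "last (drop (Suc l) \<eta>) = \<alpha>" unfolding dr by (rule last_snoc)
              moreover have "butlast (drop (Suc l) \<eta>) = drop (Suc l) \<eta>'" unfolding dr by (rule butlast_snoc)
              ultimately show ?thesis unfolding f_def using \<alpha>KB by (simp only: if_False if_True refl simp_thms)
            qed
            moreover have "\<eta>' ! l \<in> F \<alpha> l (drop (Suc l) \<eta>')" using m by (simp add: Aset_def)
            ultimately have "\<eta> \<in> Aset K (Suc n) l (f l)"
              using \<eta>P unfolding Aset_def by simp
            then show ?thesis using ln less_SucI[OF ln] by blast
          qed
        qed
      next
        assume "\<exists>f :: nat \<Rightarrow> 'a list \<Rightarrow> 'a set.
                (\<forall>l<Suc n. \<forall>\<nu>\<in>prodK_from K l (Suc n). f l \<nu> \<in> I l) \<and>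
                A \<subseteq> (\<Union>l<Suc n. Aset K (Suc n) l (f l))"
        then obtain f where fI: "\<forall>l<Suc n. \<forall>\<nu>\<in>prodK_from K l (Suc n). f l \<nu> \<in> I l"
          and fA: "A \<subseteq> (\<Union>l<Suc n. Aset K (Suc n) l (f l))" by blast
        have fn: "f n [] \<in> I n" using fI nil_from by blast
        have "B \<subseteq> f n []"
        proof
          fix \<alpha> assume \<alpha>B: "\<alpha> \<in> B"
          show "\<alpha> \<in> f n []"
          proof (rule ccontr)
            assume na: "\<alpha> \<notin> f n []"
            have \<alpha>K: "\<alpha> \<in> K n" using \<alpha>B by (simp add: B_def)
            define g where "g l \<nu>' = f l (\<nu>' @ [\<alpha>])" for l \<nu>'
            have gI: "\<forall>l<n. \<forall>\<nu>\<in>prodK_from K l n. g l \<nu> \<in> I l"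
              proof (intro allI impI ballI)
              fix l \<nu> assume "l < n" "\<nu> \<in> prodK_from K l n"
              then have "\<nu> @ [\<alpha>] \<in> prodK_from K l (Suc n)" by (rule prodK_from_snoc[of l n \<nu> K \<alpha>, OF _ _ \<alpha>K])
              moreover have "l < Suc n" using \<open>l < n\<close> by simp
              ultimately show "g l \<nu> \<in> I l" using fI unfolding g_def by blast
            qed
            have "Aa \<alpha> \<subseteq> (\<Union>l<n. Aset K n l (g l))"
            proof
              fix \<eta>' assume h: "\<eta>' \<in> Aa \<alpha>"
              then have \<eta>'P: "\<eta>' \<in> prodK K n" and inA: "\<eta>' @ [\<alpha>] \<in> A" by (auto simp: Aa_def)
              have len: "length \<eta>' = n" using \<eta>'P by (simp add: prodK_def)
              obtain l where l: "l < Suc n" and m: "\<eta>' @ [\<alpha>] \<in> Aset K (Suc n) l (f l)"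
                using fA inA by blast
              have "l \<noteq> n"
              proof
                assume "l = n"
                then have "(\<eta>' @ [\<alpha>]) ! n \<in> f n (drop (Suc n) (\<eta>' @ [\<alpha>]))" using m by (simp add: Aset_def)
                then show False using na len[symmetric] by simp
              qed
              then have ln: "l < n" using l by simp
              have dr: "drop (Suc l) (\<eta>' @ [\<alpha>]) = drop (Suc l) \<eta>' @ [\<alpha>]" using len ln by simp
              have "\<eta>' \<in> Aset K n l (g l)"
                proof -
                have "(\<eta>' @ [\<alpha>]) ! l \<in> f l (drop (Suc l) (\<eta>' @ [\<alpha>]))" using m by (simp add: Aset_def)
                then have "\<eta>' ! l \<in> g l (drop (Suc l) \<eta>')" unfolding dr g_def using ln len by (simp add: nth_append)
                then show ?thesis using \<eta>'P unfolding Aset_def by blast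
              qed
              then show "\<eta>' \<in> (\<Union>l<n. Aset K n l (g l))" using ln by (simp add: bexI[of _ l])
            qed
            then have "Aa \<alpha> \<in> J K I n" using Suc.IH[rule_format, OF AaS[of \<alpha>]] gI by blast
            then show False using \<alpha>B by (simp add: B_def)
          qed
        qed
        then have "B \<in> I n" using down[OF fn] by blast
        then show "A \<in> J K I (Suc n)" using JA by simp
      qed
    qed
  qed
qed

end
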